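(* Let $X$ and $Y$ be spaces with $X$ compact Hausdorff, let $a\colon X\to Y$ be a map, and let $E$ be a nonempty finite set. Then every affine ensemble $Q\in\langle (Y^X,a)^{\check C\Delta E}\rangle$ is $(X,1)$-almost fissile.
   Context: Spaces and maps are based unless called unbased. $\langle W\rangle$ = free abelian group on a set $W$; augmentation $\epsilon\colon\langle W\rangle\to\mathbb Z$, $\langle w\rangle\mapsto1$; an ensemble is affine if $\epsilon=1$. $Y^X$ = space of based maps $X\to Y$ (compact-open); $(Y^X,a)$ is this space with basepoint $a$. $V\mapsto V|_R$ restriction homomorphisms; $\mathcal F_n(Z)$ = finite subsets of $Z$ containing the basepoint with at most $n+1$ elements; for based $Z$, $\langle Y^Z\rangle^{(s)}=\{V:V|_R=0\ \forall R\in\mathcal F_{s-1}(Z)\}$. For unbased $U$, $(Y^X)^{(U)}$ = unbased maps $U\to Y^X$; $U\wr X=(U\times X)/(U\times\{x_0\})$; $\#^X(w)(u\wr x)=w(u)(x)$ is a bijection $(Y^X)^{(U)}\to Y^{U\wr X}$, and $\langle (Y^X)^{(U)}\rangle^{(s)}_X=\langle\#^X\rangle^{-1}\langle Y^{U\wr X}\rangle^{(s)}$. For a based space $T$, $\langle (Y^X,a)^T\rangle$ (based maps $T\to(Y^X,a)$) is regarded inside $\langle (Y^X)^{(T)}\rangle$. For nonempty finite $E$: simplex $\Delta E$, faces $\Delta F$; a layout is a set $A$ of pairwise disjoint nonempty subsets of $E$. Cone $\check CU=(U\times[0,1])/(U\times\{0\})$ based at the apex; $\check C\Delta F\subseteq\check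 C\Delta E$ and $\check C\Delta[A]=\bigvee_{F\in A}\check C\Delta F$. Combining product $\boxed{\vee}\colon\prod_{F\in A}\langle Z^{\check C\Delta F}\rangle\to\langle Z^{\check C\Delta[A]}\rangle$ multilinear with $\boxed{\vee}_F\langle v_F\rangle=\langle\bar\bigvee_Fv_F\rangle$. $Q\in\langle (Y^X,a)^{\check C\Delta E}\rangle$ is $(X,r)$-almost fissile if, for every layout $A$, $\boxed{\vee}_{F\in A}Q|_{\check C\Delta F}-Q|_{\check C\Delta[A]}\in\langle (Y^X)^{(\check C\Delta[A])}\rangle^{(r+1)}_X$. *)

theory Defs
  imports "HOL-Analysis.Analysis" "HOL-Library.Poly_Mapping"
begin

(* The free abelian group on a set W is modelled as the integer-valued
finitely supported functions ('a \<Rightarrow>\<^sub>0 int) with keys in W; frag_of w is the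
generator of w, and frag_extend is linear extension. *)

definition in_free :: "('a \<Rightarrow>\<^sub>0 int) \<Rightarrow> 'a set \<Rightarrow> bool" where
  "in_free V W \<longleftrightarrow> Poly_Mapping.keys V \<subseteq> W"

definition augm :: "('a \<Rightarrow>\<^sub>0 int) \<Rightarrow> int" where
  "augm V = (\<Sum>w \<in> Poly_Mapping.keys V. Poly_Mapping.lookup V w)"

definition affine_ens :: "('a \<Rightarrow>\<^sub>0 int) \<Rightarrow> bool" where
  "affine_ens V \<longleftrightarrow> augm V = 1"

(* Restriction homomorphism V \<mapsto> V|_R (maps are extensional functions). *)
definition restr_frag :: "'u set \<Rightarrow> (('u \<Rightarrow> 'b) \<Rightarrow>\<^sub>0 int) \<Rightarrow> (('u \<Rightarrow> 'b) \<Rightarrow>\<^sub>0 int)" where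
  "restr_frag R V = frag_extend (\<lambda>v. frag_of (restrict v R)) V"

definition Fsets :: "nat \<Rightarrow> 'z set \<Rightarrow> 'z \<Rightarrow> 'z set set" where
  "Fsets n Z z0 = {R. finite R \<and> R \<subseteq> Z \<and> z0 \<in> R \<and> card R \<le> n + 1}"

(* \<langle>Y^Z\<rangle>^(s) = {V. V|_R = 0 for all R in F_(s-1)(Z)}  (used for s \<ge> 1). *)
definition filt :: "nat \<Rightarrow> 'z set \<Rightarrow> 'z \<Rightarrow> (('z \<Rightarrow> 'b) \<Rightarrow>\<^sub>0 int) set" where
  "filt s Z z0 = {V. \<forall>R \<in> Fsets (s - 1) Z z0. restr_frag R V = 0}"

definition bmaps :: "'x topology \<Rightarrow> 'x \<Rightarrow> 'y topology \<Rightarrow> 'y \<Rightarrow> ('x \<Rightarrow> 'y) set" where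
  "bmaps X x0 Y y0 = {f. continuous_map X Y f \<and> f x0 = y0 \<and> f \<in> extensional (topspace X)}"

definition compact_open :: "'x topology \<Rightarrow> 'x \<Rightarrow> 'y topology \<Rightarrow> 'y \<Rightarrow> ('x \<Rightarrow> 'y) topology" where
  "compact_open X x0 Y y0 =
     subtopology
       (topology_generated_by {{f. f ` K \<subseteq> U} | K U. compactin X K \<and> openin Y U})
       (bmaps X x0 Y y0)"

definition umaps :: "'t topology \<Rightarrow> 'z topology \<Rightarrow> ('t \<Rightarrow> 'z) set" where
  "umaps T Z = {w. continuous_map T Z w \<and> w \<in> extensional (topspace T)}"

definition based_maps :: "'t topology \<Rightarrow> 't \<Rightarrow> 'z topology \<Rightarrow> 'z \<Rightarrow> ('t \<Rightarrow> 'z) set" where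
  "based_maps T t0 Z z0 = {w. continuous_map T Z w \<and> w t0 = z0 \<and> w \<in> extensional (topspace T)}"

(* The underlying based set of U \<ltimes> X = (U \<times> X)/(U \<times> {x0}): None is the base
point (the collapsed set U \<times> {x0}), Some (u,x) with x \<noteq> x0 the other points. *)
definition smash_set :: "'u set \<Rightarrow> 'x topology \<Rightarrow> 'x \<Rightarrow> ('u \<times> 'x) option set" where
  "smash_set U X x0 = insert None (Some ` (U \<times> (topspace X - {x0})))"

definition sharp :: "'x topology \<Rightarrow> 'x \<Rightarrow> 'y \<Rightarrow> 'u set \<Rightarrow> ('u \<Rightarrow> 'x \<Rightarrow> 'y)
                     \<Rightarrow> (('u \<times> 'x) option \<Rightarrow> 'y)" where
  "sharp X x0 y0 U w =
     restrict (\<lambda>p. case p of None \<Rightarrow> y0 | Some (u, x) \<Rightarrow> w u x) (smash_set U X x0)"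

(* \<langle>(Y^X)^(U)\<rangle>^(s)_X = \<langle>#^X\<rangle>^{-1} \<langle>Y^(U \<ltimes> X)\<rangle>^(s), for a space T with underlying set U. *)
definition filtX :: "nat \<Rightarrow> 'u topology \<Rightarrow> 'x topology \<Rightarrow> 'x \<Rightarrow> 'y topology \<Rightarrow> 'y
                     \<Rightarrow> (('u \<Rightarrow> 'x \<Rightarrow> 'y) \<Rightarrow>\<^sub>0 int) set" where
  "filtX s T X x0 Y y0 =
     {V. in_free V (umaps T (compact_open X x0 Y y0)) \<and>
         frag_extend (\<lambda>w. frag_of (sharp X x0 y0 (topspace T) w)) V
           \<in> filt s (smash_set (topspace T) X x0) None}"

(* The cone \<check>C\<Delta>F, realised inside the functions E \<rightarrow> \<real> via
(p,s) \<mapsto> s\<cdot>p: it is {t \<ge> 0 supported in F with \<Sum>t \<le> 1}, the apex being 0. *)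
definition ccone :: "'e set \<Rightarrow> ('e \<Rightarrow> real) set" where
  "ccone F = {t. (\<forall>i. 0 \<le> t i) \<and> (\<forall>i. i \<notin> F \<longrightarrow> t i = 0) \<and> sum t F \<le> 1}"

definition apex :: "'e \<Rightarrow> real" where
  "apex = (\<lambda>_. 0)"

definition layout :: "'e set \<Rightarrow> 'e set set \<Rightarrow> bool" where
  "layout E A \<longleftrightarrow> (\<forall>F\<in>A. F \<subseteq> E \<and> F \<noteq> {}) \<and> (\<forall>F\<in>A. \<forall>G\<in>A. F \<noteq> G \<longrightarrow> F \<inter> G = {})"

(* \<check>C\<Delta>[A] = \<Or>_{F\<in>A} \<check>C\<Delta>F as a subspace of \<check>C\<Delta>E. *)
definition coneL :: "'e set set \<Rightarrow> ('e \<Rightarrow> real) set" where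
  "coneL A = insert apex (\<Union>F\<in>A. ccone F)"

definition wedge_map :: "'z \<Rightarrow> 'e set set \<Rightarrow> ('e set \<Rightarrow> ('e \<Rightarrow> real) \<Rightarrow> 'z) \<Rightarrow> ('e \<Rightarrow> real) \<Rightarrow> 'z" where
  "wedge_map a A v = restrict
     (\<lambda>t. if t = apex then a else v (SOME F. F \<in> A \<and> t \<in> ccone F) t) (coneL A)"

(* Combining product: the multilinear map with
  \<langle>v_F\<rangle>_F \<mapsto> \<langle>\<Or>_F v_F\<rangle>, written out on a family of ensembles. *)
definition combine :: "'z \<Rightarrow> 'e set set \<Rightarrow> ('e set \<Rightarrow> ((('e \<Rightarrow> real) \<Rightarrow> 'z) \<Rightarrow>\<^sub>0 int))
                       \<Rightarrow> ((('e \<Rightarrow> real) \<Rightarrow> 'z) \<Rightarrow>\<^sub>0 int)" where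
  "combine a A Qs =
     (\<Sum>v \<in> (\<Pi>\<^sub>E F\<in>A. Poly_Mapping.keys (Qs F)).
        frag_cmul (\<Prod>F\<in>A. Poly_Mapping.lookup (Qs F) (v F)) (frag_of (wedge_map a A v)))"

definition almost_fissile ::
  "'x topology \<Rightarrow> 'x \<Rightarrow> 'y topology \<Rightarrow> 'y \<Rightarrow> ('x \<Rightarrow> 'y) \<Rightarrow> nat \<Rightarrow> 'e set
   \<Rightarrow> ((('e \<Rightarrow> real) \<Rightarrow> 'x \<Rightarrow> 'y) \<Rightarrow>\<^sub>0 int) \<Rightarrow> bool" where
  "almost_fissile X x0 Y y0 a r E Q \<longleftrightarrow>
     (\<forall>A. layout E A \<longrightarrow>
        combine a A (\<lambda>F. restr_frag (ccone F) Q) - restr_frag (coneL A) Q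
          \<in> filtX (r + 1) (top_of_set (coneL A)) X x0 Y y0)"

end

theory Submission
  imports Defs
begin

lemma lookup_push:
  "Poly_Mapping.lookup (frag_extend (frag_of o g) V) y =
     (\<Sum>k\<in>Poly_Mapping.keys V. Poly_Mapping.lookup V k * (if y = g k then 1 else 0))"
  unfolding frag_extend_def by (simp add: lookup_sum lookup_frag_of)

lemma augm_alt: "augm V = Poly_Mapping.lookup (frag_extend (frag_of o (\<lambda>_. ())) V) ()"
  unfolding lookup_push augm_def by simp

lemma push_compose:
  "frag_extend (frag_of o h) (frag_extend (frag_of o g) V) = frag_extend (frag_of o (h o g)) V"
  by (simp add: frag_extend_compose comp_assoc)

lemma augm_push: "augm (frag_extend (frag_of o g) V) = augm V"
  unfolding augm_alt push_compose by (simp add: comp_def)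

lemma restr_frag_push: "restr_frag R V = frag_extend (frag_of o (\<lambda>v. restrict v R)) V"
  unfolding restr_frag_def by (simp add: comp_def)

lemma closed_ccone: "finite F \<Longrightarrow> closed (ccone F)"
proof -
  assume "finite F"
  have eq: "ccone F = (\<Inter>i. {t. 0 \<le> t i}) \<inter> (\<Inter>i\<in>-F. {t. t i = 0}) \<inter> {t. sum t F \<le> 1}"
    unfolding ccone_def by auto
  have c: "continuous_on UNIV (\<lambda>t::'a\<Rightarrow>real. sum t F)"
    by (intro continuous_intros continuous_on_sum) simp
  show ?thesis unfolding eq
    by (intro closed_Int closed_INT ballI closed_Collect_le closed_Collect_eq c continuous_on_const) simp_all
qed

lemma apex_ccone: "apex \<in> ccone F"
  by (simp add: ccone_def apex_def)

lemma ccone_empty: "ccone {} = {apex}"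
  by (auto simp: ccone_def apex_def)

lemma ccone_mono: "finite E \<Longrightarrow> F \<subseteq> E \<Longrightarrow> ccone F \<subseteq> ccone E"
proof
  fix t assume fE: "finite E" "F \<subseteq> E" "t \<in> ccone F"
  then have "sum t E = sum t F"
    by (intro sum.mono_neutral_right) (auto simp: ccone_def)
  with fE show "t \<in> ccone E" by (auto simp: ccone_def)
qed

lemma ccone_uniq: "u \<in> ccone F \<Longrightarrow> u \<in> ccone G \<Longrightarrow> u \<noteq> apex \<Longrightarrow> F \<inter> G \<noteq> {}"
proof -
  assume "u \<in> ccone F" "u \<in> ccone G" "u \<noteq> apex"
  then obtain i where "u i \<noteq> 0" by (auto simp: apex_def)
  then show ?thesis using \<open>u \<in> ccone F\<close> \<open>u \<in> ccone G\<close> by (auto simp: ccone_def)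
qed

lemma topspace_CO: "topspace (compact_open X x0 Y y0) = bmaps X x0 Y y0"
proof -
  have "UNIV \<in> {{f. f ` K \<subseteq> U} | K U. compactin X K \<and> openin Y U}"
    by (rule CollectI, rule exI[of _ "{}"], rule exI[of _ "{}"]) auto
  then show ?thesis unfolding compact_open_def by auto
qed

lemma augm_sum: "augm V = (\<Sum>k\<in>Poly_Mapping.keys V. Poly_Mapping.lookup V k)"
  by (simp add: augm_def)

lemma combine_ev:
  fixes Q :: "((('e \<Rightarrow> real) \<Rightarrow> 'x \<Rightarrow> 'y) \<Rightarrow>\<^sub>0 int)"
  assumes finA: "finite A"
    and disj: "\<And>F G. F \<in> A \<Longrightarrow> G \<in> A \<Longrightarrow> F \<noteq> G \<Longrightarrow> F \<inter> G = {}"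
    and u: "u \<in> coneL A"
    and QF: "\<And>F. F \<in> A \<Longrightarrow> Qs F = restr_frag (ccone F) Q"
    and aug: "augm Q = 1"
    and qa: "\<And>q. q \<in> Poly_Mapping.keys Q \<Longrightarrow> q apex = a"
  shows "frag_extend (frag_of o (\<lambda>w. w u x)) (combine a A Qs) = frag_extend (frag_of o (\<lambda>q. q u x)) Q"
proof (rule poly_mapping_eqI)
  fix y
  let ?P = "\<Pi>\<^sub>E F\<in>A. Poly_Mapping.keys (Qs F)"
  let ?c = "\<lambda>v. \<Prod>F\<in>A. Poly_Mapping.lookup (Qs F) (v F)"
  have finP: "finite ?P" by (intro finite_PiE finA) auto
  have L: "Poly_Mapping.lookup (frag_extend (frag_of o (\<lambda>w. w u x)) (combine a A Qs)) y
      = (\<Sum>v\<in>?P. ?c v * (if y = wedge_map a A v u x then 1 else 0))"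
    unfolding combine_def frag_extend_sum[OF finP]
    by (simp add: lookup_sum frag_extend_cmul lookup_frag_of)
  have augQF: "augm (Qs F) = 1" if "F \<in> A" for F
    using aug by (simp add: QF[OF that] restr_frag_push augm_push)
  have R: "Poly_Mapping.lookup (frag_extend (frag_of o (\<lambda>q. q u x)) Q) y =
     (\<Sum>k\<in>Poly_Mapping.keys Q. Poly_Mapping.lookup Q k * (if y = k u x then 1 else 0))"
    by (rule lookup_push)
  show "Poly_Mapping.lookup (frag_extend (frag_of o (\<lambda>w. w u x)) (combine a A Qs)) y =
     Poly_Mapping.lookup (frag_extend (frag_of o (\<lambda>q. q u x)) Q) y"
  proof (cases "u = apex")
    case True
    have "(\<Sum>v\<in>?P. ?c v * (if y = wedge_map a A v u x then 1 else 0))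
        = (\<Sum>v\<in>?P. ?c v) * (if y = a x then 1 else 0)"
      unfolding sum_distrib_right using True
      by (intro sum.cong refl) (simp add: wedge_map_def coneL_def)
    also have "(\<Sum>v\<in>?P. ?c v) = (\<Prod>F\<in>A. \<Sum>k\<in>Poly_Mapping.keys (Qs F). Poly_Mapping.lookup (Qs F) k)"
      by (rule prod_sum_PiE[symmetric]) (auto simp: finA)
    also have "\<dots> = 1" using augQF by (simp add: augm_sum)
    finally have l: "(\<Sum>v\<in>?P. ?c v * (if y = wedge_map a A v u x then 1 else 0)) = (if y = a x then 1 else 0)"
      by simp
    have "(\<Sum>k\<in>Poly_Mapping.keys Q. Poly_Mapping.lookup Q k * (if y = k u x then 1 else 0))
       = (\<Sum>k\<in>Poly_Mapping.keys Q. Poly_Mapping.lookup Q k) * (if y = a x then 1 else 0)"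
      unfolding sum_distrib_right using True qa by (intro sum.cong refl) simp
    then show ?thesis using L R l aug by (simp add: augm_sum)
  next
    case False
    then obtain F0 where F0: "F0 \<in> A" "u \<in> ccone F0" using u by (auto simp: coneL_def)
    have some: "(SOME F. F \<in> A \<and> u \<in> ccone F) = F0"
    proof (rule some_equality)
      fix G assume "G \<in> A \<and> u \<in> ccone G"
      then show "G = F0" using disj[of G F0] F0 ccone_uniq[of u G F0] False by blast
    qed (use F0 in auto)
    have wv: "wedge_map a A v u = v F0 u" for v
      using u False by (simp add: wedge_map_def some)
    define f where "f F k = Poly_Mapping.lookup (Qs F) k * (if F = F0 then (if y = k u x then 1 else 0) else 1)" for F k
    have "(\<Sum>v\<in>?P. ?c v * (if y = wedge_map a A v u x then 1 else 0))
        = (\<Sum>v\<in>?P. \<Prod>F\<in>A. f F (v F))"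
    proof (intro sum.cong refl)
      fix v
      have "(\<Prod>F\<in>A. f F (v F)) = f F0 (v F0) * (\<Prod>F\<in>A-{F0}. f F (v F))"
        using F0 finA by (simp add: prod.remove)
      also have "(\<Prod>F\<in>A-{F0}. f F (v F)) = (\<Prod>F\<in>A-{F0}. Poly_Mapping.lookup (Qs F) (v F))"
        by (intro prod.cong refl) (simp add: f_def)
      also have "?c v = Poly_Mapping.lookup (Qs F0) (v F0) * (\<Prod>F\<in>A-{F0}. Poly_Mapping.lookup (Qs F) (v F))"
        using F0 finA by (simp add: prod.remove)
      ultimately show "?c v * (if y = wedge_map a A v u x then 1 else 0) = (\<Prod>F\<in>A. f F (v F))"
        by (simp add: wv f_def)
    qed
    also have "\<dots> = (\<Prod>F\<in>A. \<Sum>k\<in>Poly_Mapping.keys (Qs F). f F k)"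
      by (rule prod_sum_PiE[symmetric]) (auto simp: finA)
    also have "\<dots> = (\<Sum>k\<in>Poly_Mapping.keys (Qs F0). f F0 k) * (\<Prod>F\<in>A-{F0}. \<Sum>k\<in>Poly_Mapping.keys (Qs F). f F k)"
      using F0 finA by (simp add: prod.remove)
    also have "(\<Prod>F\<in>A-{F0}. \<Sum>k\<in>Poly_Mapping.keys (Qs F). f F k) = 1"
      using augQF by (intro prod.neutral) (auto simp: f_def augm_sum)
    also have "(\<Sum>k\<in>Poly_Mapping.keys (Qs F0). f F0 k)
        = Poly_Mapping.lookup (frag_extend (frag_of o (\<lambda>w. w u x)) (Qs F0)) y"
      by (simp add: lookup_push f_def)
    also have "frag_extend (frag_of o (\<lambda>w. w u x)) (Qs F0) = frag_extend (frag_of o (\<lambda>q. q u x)) Q"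
      unfolding QF[OF F0(1)] restr_frag_push push_compose using F0(2)
      by (simp add: comp_def)
    finally show ?thesis using L by simp
  qed
qed

theorem lemma13p2:
  fixes X :: "'x topology" and Y :: "'y topology" and x0 :: 'x and y0 :: 'y
    and a :: "'x \<Rightarrow> 'y" and E :: "'e set"
    and Q :: "((('e \<Rightarrow> real) \<Rightarrow> 'x \<Rightarrow> 'y) \<Rightarrow>\<^sub>0 int)"
  assumes "x0 \<in> topspace X" and "y0 \<in> topspace Y"
    and "compact_space X" and "Hausdorff_space X"
    and "a \<in> bmaps X x0 Y y0"
    and "finite E" and "E \<noteq> {}"
    and "in_free Q (based_maps (top_of_set (ccone E)) apex (compact_open X x0 Y y0) a)"
    and "affine_ens Q"
  shows "almost_fissile X x0 Y y0 a 1 E Q"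
proof -
  let ?CO = "compact_open X x0 Y y0"
  have Qk: "\<And>q. q \<in> Poly_Mapping.keys Q \<Longrightarrow> continuous_map (top_of_set (ccone E)) ?CO q \<and> q apex = a"
    using assms(8) by (auto simp: in_free_def based_maps_def)
  have aug: "augm Q = 1" using assms(9) by (simp add: affine_ens_def)
  have aCO: "a \<in> topspace ?CO" using assms(5) by (simp add: topspace_CO)
  show ?thesis unfolding almost_fissile_def
  proof (intro allI impI)
    fix A assume lay: "layout E A"
    have AE: "\<And>F. F \<in> A \<Longrightarrow> F \<subseteq> E \<and> F \<noteq> {}"
      and disj: "\<And>F G. F \<in> A \<Longrightarrow> G \<in> A \<Longrightarrow> F \<noteq> G \<Longrightarrow> F \<inter> G = {}"
      using lay by (auto simp: layout_def)
    have finA: "finite A" using AE finite_subset[of A "Pow E"] assms(6) by blast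
    have LE: "coneL A \<subseteq> ccone E" using AE ccone_mono[OF assms(6)] apex_ccone
      unfolding coneL_def by blast
    have apexL: "apex \<in> coneL A" by (simp add: coneL_def)
    define QF where "QF = (\<lambda>F. restr_frag (ccone F) Q)"
    define C where "C = combine a A QF"
    define Rr where "Rr = restr_frag (coneL A) Q"
    let ?T = "top_of_set (coneL A)"
    have ev: "frag_extend (frag_of o (\<lambda>w. w u x)) (C - Rr) = 0" if u: "u \<in> coneL A" for u x
    proof -
      have "frag_extend (frag_of o (\<lambda>w. w u x)) C = frag_extend (frag_of o (\<lambda>q. q u x)) Q"
        unfolding C_def by (rule combine_ev[OF finA disj u]) (use aug Qk in \<open>auto simp: QF_def\<close>)
      moreover have "frag_extend (frag_of o (\<lambda>w. w u x)) Rr = frag_extend (frag_of o (\<lambda>q. q u x)) Q"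
        unfolding Rr_def restr_frag_push push_compose using u by (simp add: comp_def)
      ultimately show ?thesis by (simp add: frag_extend_diff)
    qed
    have contw: "continuous_map ?T ?CO (wedge_map a A v)" if v: "v \<in> (\<Pi>\<^sub>E F\<in>A. Poly_Mapping.keys (QF F))" for v
    proof -
      have "\<forall>F\<in>A. \<exists>q. q \<in> Poly_Mapping.keys Q \<and> v F = restrict q (ccone F)"
      proof
        fix F assume "F \<in> A"
        then have "v F \<in> Poly_Mapping.keys (QF F)" using v by auto
        then show "\<exists>q. q \<in> Poly_Mapping.keys Q \<and> v F = restrict q (ccone F)"
          using keys_frag_extend[of "\<lambda>v. frag_of (restrict v (ccone F))" Q]
          by (auto simp: QF_def restr_frag_def keys_frag_of)
      qed
      then obtain qs where qs: "\<And>F. F \<in> A \<Longrightarrow> qs F \<in> Poly_Mapping.keys Q \<and> v F = restrict (qs F) (ccone F)"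
        by metis
      define f where "f F = (if F = {} then (\<lambda>_. a) else qs F)" for F
      have fapex: "f F apex = a" if "F \<in> insert {} A" for F
        using that qs Qk by (auto simp: f_def)
      have sub: "ccone F \<subseteq> coneL A" if "F \<in> insert {} A" for F
        using that by (auto simp: coneL_def ccone_empty)
      show ?thesis
      proof (rule pasting_lemma_closed[where I="insert {} A" and T=ccone and f=f])
        show "finite (insert {} A)" using finA by simp
      next
        fix F assume F: "F \<in> insert {} A"
        have "finite F" using F AE assms(6) finite_subset by auto
        then have "closedin ?T (coneL A \<inter> ccone F)"
          by (intro closedin_closed_Int closed_ccone)
        then show "closedin ?T (ccone F)" using sub[OF F] by (simp add: Int_absorb1)
      next
        fix F assume F: "F \<in> insert {} A"
        show "continuous_map (subtopology ?T (ccone F)) ?CO (f F)"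
        proof (cases "F = {}")
          case True
          then show ?thesis using aCO by (simp add: f_def)
        next
          case False
          then have FA: "F \<in> A" using F by auto
          have "subtopology ?T (ccone F) = subtopology (top_of_set (ccone E)) (coneL A \<inter> ccone F)"
            using LE by (simp add: subtopology_subtopology) (metis Int_absorb1 inf.coboundedI1)
          then show ?thesis using Qk qs[OF FA] False
            by (simp add: f_def continuous_map_from_subtopology)
        qed
      next
        fix i j t assume ij: "i \<in> insert {} A" "j \<in> insert {} A" "t \<in> topspace ?T \<inter> ccone i \<inter> ccone j"
        show "f i t = f j t"
        proof (cases "i = j")
          case False
          have "t = apex"
          proof (rule ccontr)
            assume na: "t \<noteq> apex"
            then have "i \<noteq> {}" "j \<noteq> {}" using ij by (auto simp: ccone_empty)
            then have "i \<in> A" "j \<in> A" using ij by auto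
            then show False using disj[OF _ _ False] ccone_uniq[of t i j] na ij by auto
          qed
          then show ?thesis using fapex ij by simp
        qed simp
      next
        fix t assume t: "t \<in> topspace ?T"
        show "\<exists>j. j \<in> insert {} A \<and> t \<in> ccone j \<and> wedge_map a A v t = f j t"
        proof (cases "t = apex")
          case True
          then show ?thesis using apexL
            by (intro exI[of _ "{}"]) (simp add: wedge_map_def ccone_empty f_def)
        next
          case False
          then obtain F0 where F0: "F0 \<in> A" "t \<in> ccone F0" using t by (auto simp: coneL_def)
          have some: "(SOME F. F \<in> A \<and> t \<in> ccone F) = F0"
          proof (rule some_equality)
            fix G assume "G \<in> A \<and> t \<in> ccone G"
            then show "G = F0" using disj[of G F0] F0 ccone_uniq[of t G F0] False by blast
          qed (use F0 in auto)
          have "wedge_map a A v t = qs F0 t"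
            using t False F0 qs[OF F0(1)] by (simp add: wedge_map_def some)
          moreover have "F0 \<noteq> {}" using AE F0 by auto
          ultimately show ?thesis using F0 by (intro exI[of _ F0]) (simp add: f_def)
        qed
      qed
    qed
    have keysC: "Poly_Mapping.keys C \<subseteq> umaps ?T ?CO"
    proof
      fix w assume "w \<in> Poly_Mapping.keys C"
      then obtain v where v: "v \<in> (\<Pi>\<^sub>E F\<in>A. Poly_Mapping.keys (QF F))" and w: "w = wedge_map a A v"
        using keys_sum[of "\<lambda>v. frag_cmul (\<Prod>F\<in>A. Poly_Mapping.lookup (QF F) (v F)) (frag_of (wedge_map a A v))"
            "\<Pi>\<^sub>E F\<in>A. Poly_Mapping.keys (QF F)"]
        unfolding C_def combine_def
        by (auto dest!: subsetD[OF keys_cmul] simp: keys_frag_of)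
      show "w \<in> umaps ?T ?CO"
        unfolding umaps_def w using contw[OF v]
        by (simp add: wedge_map_def)
    qed
    have keysR: "Poly_Mapping.keys Rr \<subseteq> umaps ?T ?CO"
    proof
      fix w assume "w \<in> Poly_Mapping.keys Rr"
      then obtain q where q: "q \<in> Poly_Mapping.keys Q" and w: "w = restrict q (coneL A)"
        using keys_frag_extend[of "\<lambda>v. frag_of (restrict v (coneL A))" Q]
        by (auto simp: Rr_def restr_frag_def keys_frag_of)
      have "continuous_map (subtopology (top_of_set (ccone E)) (coneL A)) ?CO q"
        using Qk[OF q] by (simp add: continuous_map_from_subtopology)
      then have "continuous_map ?T ?CO q"
        using LE by (simp add: subtopology_subtopology Int_absorb1 inf.absorb2)
      then have "continuous_map ?T ?CO w"
        unfolding w by (rule continuous_map_eq) simp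
      then show "w \<in> umaps ?T ?CO" by (simp add: umaps_def w)
    qed
    have free: "in_free (C - Rr) (umaps ?T ?CO)"
      unfolding in_free_def using keysC keysR keys_diff[of C Rr] by blast
    have filt: "frag_extend (\<lambda>w. frag_of (sharp X x0 y0 (coneL A) w)) (C - Rr)
                  \<in> filt (1 + 1) (smash_set (coneL A) X x0) None"
      unfolding filt_def Fsets_def
    proof (intro CollectI ballI)
      fix R assume "R \<in> {R. finite R \<and> R \<subseteq> smash_set (coneL A) X x0 \<and> None \<in> R \<and> card R \<le> 1 + 1 - 1 + 1}"
      then have R: "finite R" "R \<subseteq> smash_set (coneL A) X x0" "None \<in> R" "card R \<le> 2" by auto
      obtain u x where u: "u \<in> coneL A" and Rux: "R \<subseteq> {None, Some (u, x)}"
      proof (cases "R = {None}")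
        case True
        then show ?thesis using that[OF apexL] by auto
      next
        case False
        then obtain p where p: "p \<in> R" "p \<noteq> None" using R(3) by blast
        then obtain u x where pux: "p = Some (u, x)" "u \<in> coneL A"
          using R(2) by (auto simp: smash_set_def)
        have "R \<subseteq> {None, p}"
        proof
          fix r assume r: "r \<in> R"
          show "r \<in> {None, p}"
          proof (rule ccontr)
            assume "r \<notin> {None, p}"
            then have "card {None, p, r} = 3" using p(2) by (simp add: card_insert_if) blast
            moreover have "card {None, p, r} \<le> card R"
              using R r p by (intro card_mono) auto
            ultimately show False using R(4) by simp
          qed
        qed
        then show ?thesis using that[OF pux(2)] pux(1) by auto
      qed
      define G where "G y = restrict (\<lambda>p. case p of None \<Rightarrow> y0 | Some _ \<Rightarrow> y) R" for y
      have GS: "(\<lambda>v. restrict v R) o (sharp X x0 y0 (coneL A)) = G o (\<lambda>w. w u x)"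
      proof (rule ext)
        fix w
        show "((\<lambda>v. restrict v R) o (sharp X x0 y0 (coneL A))) w = (G o (\<lambda>w. w u x)) w"
          unfolding comp_def G_def sharp_def
          using R(2) Rux by (auto simp: restrict_def fun_eq_iff split: option.split)
      qed
      have "restr_frag R (frag_extend (\<lambda>w. frag_of (sharp X x0 y0 (coneL A) w)) (C - Rr))
          = frag_extend (frag_of o G) (frag_extend (frag_of o (\<lambda>w. w u x)) (C - Rr))"
        unfolding restr_frag_push push_compose
        by (simp add: comp_def[of frag_of "sharp X x0 y0 (coneL A)", symmetric] push_compose GS)
      also have "\<dots> = 0" by (simp add: ev[OF u])
      finally show "restr_frag R (frag_extend (\<lambda>w. frag_of (sharp X x0 y0 (coneL A) w)) (C - Rr)) = 0" .
    qed
    show "combine a A (\<lambda>F. restr_frag (ccone F) Q) - restr_frag (coneL A) Q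
          \<in> filtX (1 + 1) (top_of_set (coneL A)) X x0 Y y0"
      unfolding filtX_def using free filt
      by (simp add: C_def Rr_def QF_def)
  qed
qed

end
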